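(* Let $X_1,\dots,X_n$ ($n\ge 1$) and $Y$ be jointly distributed discrete random variables with $I(\mathbf X;Y)>0$, where $\mathbf X=(X_1,\dots,X_n)$. Let $\Pi:\mathcal A_n\to\mathbb R$ be any partial information decomposition (as defined in the context). Then the average degree of vulnerability satisfies $$\bar v=\frac{\sum_{j=1}^n I(X_j;Y\mid \mathbf X_{-j})}{I(\mathbf X;Y)},$$ where $\mathbf X_{-j}$ denotes the collection of all sources except $X_j$. In particular, $\bar v$ takes the same value for every partial information decomposition $\Pi$ and depends only on Shannon entropies of the joint distribution of $(\mathbf X,Y)$.
   Context: Notation: $[n]=\{1,\dots,n\}$. For $\mathbf a\subseteq[n]$, $X_{\mathbf a}=(X_i)_{i\in\mathbf a}$ (with $X_\emptyset$ a constant), and $\mathbf X_{-j}=X_{[n]\setminus\{j\}}$. Antichains: $\mathcal A_n$ is the set of all nonempty collections $\alpha$ of nonempty subsets of $[n]$ such that no element of $\alpha$ is a proper subset of another element of $\alpha$. Partial information decomposition (PID): any function $\Pi:\mathcal A_n\to\mathbb R$ satisfying the consistency equation: for every nonempty $\mathbf a\subseteq[n]$, $$I(X_{\mathbf a};Y)=\sum_{\alpha\in\mathcal A_n:\ \exists \mathbf b\in\alpha,\ \mathbf b\subseteq \mathbf a}\Pi(\alpha).$$ Degree of vulnerability of $\alpha\in\mathcal A_n$: $v(\alpha)=|\{i\in[n]: i\in\mathbf b \text{ for all } \mathbf b\in\alpha\}|$. Average degree of vulnerability (defined when $I(\mathbf X;Y)>0$): $$\bar v=\sum_{j=0}^n j\sum_{\alpha:\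 v(\alpha)=j}\frac{\Pi(\alpha)}{I(\mathbf X;Y)}.$$ *)

theory Defs
  imports "HOL-Probability.Probability"
begin

definition MI :: "'o pmf \<Rightarrow> ('o \<Rightarrow> 'a) \<Rightarrow> ('o \<Rightarrow> 'b) \<Rightarrow> real" where
  "MI M X Y = prob_space.mutual_information (measure_pmf M) 2
     (count_space (X ` space (measure_pmf M))) (count_space (Y ` space (measure_pmf M))) X Y"

definition CMI :: "'o pmf \<Rightarrow> ('o \<Rightarrow> 'a) \<Rightarrow> ('o \<Rightarrow> 'b) \<Rightarrow> ('o \<Rightarrow> 'c) \<Rightarrow> real" where
  "CMI M X Y Z = prob_space.conditional_mutual_information (measure_pmf M) 2
     (count_space (X ` space (measure_pmf M))) (count_space (Y ` space (measure_pmf M)))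
     (count_space (Z ` space (measure_pmf M))) X Y Z"

text \<open>The sub-vector X_a = (X_i)_{i in a}; X_{} is constant.\<close>
definition Xsub :: "(nat \<Rightarrow> 'o \<Rightarrow> 'v) \<Rightarrow> nat set \<Rightarrow> 'o \<Rightarrow> (nat \<Rightarrow> 'v)" where
  "Xsub X a = (\<lambda>\<omega>. restrict (\<lambda>i. X i \<omega>) a)"

definition antichains :: "nat \<Rightarrow> nat set set set" where
  "antichains n = {\<alpha>. \<alpha> \<noteq> {} \<and> (\<forall>b\<in>\<alpha>. b \<noteq> {} \<and> b \<subseteq> {1..n})
                      \<and> (\<forall>b\<in>\<alpha>. \<forall>c\<in>\<alpha>. \<not> b \<subset> c)}"

definition is_PID :: "'o pmf \<Rightarrow> nat \<Rightarrow> (nat \<Rightarrow> 'o \<Rightarrow> 'v) \<Rightarrow> ('o \<Rightarrow> 'w) \<Rightarrow> (nat set set \<Rightarrow> real) \<Rightarrow> bool" where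
  "is_PID M n X Y P \<longleftrightarrow>
     (\<forall>a. a \<noteq> {} \<and> a \<subseteq> {1..n} \<longrightarrow>
        MI M (Xsub X a) Y = (\<Sum>\<alpha>\<in>{\<alpha>\<in>antichains n. \<exists>b\<in>\<alpha>. b \<subseteq> a}. P \<alpha>))"

definition vuln :: "nat \<Rightarrow> nat set set \<Rightarrow> nat" where
  "vuln n \<alpha> = card {i\<in>{1..n}. \<forall>b\<in>\<alpha>. i \<in> b}"

definition avg_vuln :: "'o pmf \<Rightarrow> nat \<Rightarrow> (nat \<Rightarrow> 'o \<Rightarrow> 'v) \<Rightarrow> ('o \<Rightarrow> 'w) \<Rightarrow> (nat set set \<Rightarrow> real) \<Rightarrow> real" where
  "avg_vuln M n X Y P =
     (\<Sum>j=0..n. real j * (\<Sum>\<alpha>\<in>{\<alpha>\<in>antichains n. vuln n \<alpha> = j}. P \<alpha> / MI M (Xsub X {1..n}) Y))"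

end

theory Submission
  imports Defs
begin


context information_space begin

lemma MI_superset:
  assumes X: "simple_function M X" and Y: "simple_function M Y"
    and A: "Y`space M \<subseteq> A" "finite A"
  shows "mutual_information b (count_space (X`space M)) (count_space A) X Y = \<I>(X;Y)"
proof -
  define Px where "Px x = prob (X-`{x} \<inter> space M)" for x
  define Py where "Py y = prob (Y-`{y} \<inter> space M)" for y
  define Pxy where "Pxy z = prob ((\<lambda>x. (X x, Y x))-`{z} \<inter> space M)" for z
  have XY: "simple_function M (\<lambda>x. (X x, Y x))" using X Y by (rule simple_function_Pair)
  have sX: "simple_distributed M X Px" unfolding Px_def
    using X by (rule simple_distributedI) (auto simp: measure_nonneg)
  have sY: "simple_distributed M Y Py" unfolding Py_def
    using Y by (rule simple_distributedI) (auto simp: measure_nonneg)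
  have sXY: "simple_distributed M (\<lambda>x. (X x, Y x)) Pxy" unfolding Pxy_def
    using XY by (rule simple_distributedI) (auto simp: measure_nonneg)
  have finX: "finite (X`space M)" using X by (rule simple_functionD)
  have finXY: "finite ((\<lambda>x. (X x, Y x))`space M)" using XY by (rule simple_functionD)
  have DX: "distributed M (count_space (X`space M)) X Px" using sX by (rule simple_distributed)
  have DY: "distributed M (count_space A) Y (\<lambda>y. if y \<in> Y`space M then Py y else 0)"
    by (rule distributed_simple_function_superset[OF Y _ A]) (simp add: Py_def)
  have PM: "count_space (X`space M) \<Otimes>\<^sub>M count_space A = count_space (X`space M \<times> A)"
    using finX A by (simp add: pair_measure_count_space)
  have DXY: "distributed M (count_space (X`space M) \<Otimes>\<^sub>M count_space A) (\<lambda>x. (X x, Y x))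
      (\<lambda>z. if z \<in> (\<lambda>x. (X x, Y x))`space M then Pxy z else 0)"
    unfolding PM
    by (rule distributed_simple_function_superset[OF XY]) (use A finX in \<open>auto simp: Pxy_def\<close>)
  have "mutual_information b (count_space (X`space M)) (count_space A) X Y =
    integral\<^sup>L (count_space (X`space M) \<Otimes>\<^sub>M count_space A)
      (\<lambda>z. (if z \<in> (\<lambda>x. (X x, Y x))`space M then Pxy z else 0) *
        log b ((if z \<in> (\<lambda>x. (X x, Y x))`space M then Pxy z else 0) /
          (Px (fst z) * (if snd z \<in> Y`space M then Py (snd z) else 0))))"
    by (rule mutual_information_distr[OF _ _ DX _ DY _ DXY])
       (auto simp: sigma_finite_measure_count_space_finite finX A Px_def Py_def Pxy_def measure_nonneg)
  also have "\<dots> = (\<Sum>z\<in>X`space M \<times> A.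
      (if z \<in> (\<lambda>x. (X x, Y x))`space M then Pxy z else 0) *
        log b ((if z \<in> (\<lambda>x. (X x, Y x))`space M then Pxy z else 0) /
          (Px (fst z) * (if snd z \<in> Y`space M then Py (snd z) else 0))))"
    unfolding PM using finX A by (simp add: lebesgue_integral_count_space_finite)
  also have "\<dots> = (\<Sum>z\<in>(\<lambda>x. (X x, Y x))`space M. Pxy z * log b (Pxy z / (Px (fst z) * Py (snd z))))"
    by (rule sum.mono_neutral_cong_right) (use finX A finXY in auto)
  also have "\<dots> = \<I>(X;Y)"
    by (subst mutual_information_simple_distributed[OF sX sY sXY]) (simp add: split_beta')
  finally show ?thesis .
qed


lemma entropy_pair:
  assumes X: "simple_function M X" and Y: "simple_function M Y"
  shows "entropy b (count_space (X`space M) \<Otimes>\<^sub>M count_space (Y`space M)) (\<lambda>x. (X x, Y x))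
     = \<H>(\<lambda>x. (X x, Y x))"
proof -
  have "\<H>(\<lambda>x. (X x, Y x)) = \<H>((\<lambda>(a,b). (b,a)) \<circ> (\<lambda>x. (Y x, X x)))"
    by (simp add: comp_def)
  also have "\<dots> = \<H>(\<lambda>x. (Y x, X x))"
    by (rule entropy_of_inj[OF simple_function_Pair[OF Y X]]) (auto simp: inj_on_def)
  finally show ?thesis
    using entropy_chain_rule[OF Y X] conditional_entropy_eq_entropy_simple[OF X Y] by simp
qed

lemma MI_entropy:
  assumes X: "simple_function M X" and Y: "simple_function M Y"
  shows "\<I>(X;Y) = \<H>(X) + \<H>(Y) - \<H>(\<lambda>x. (X x, Y x))"
  using mutual_information_eq_entropy_conditional_entropy[OF X Y]
    conditional_entropy_eq_entropy_simple[OF X Y] entropy_pair[OF X Y] by simp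

lemma CMI_entropy:
  assumes X: "simple_function M X" and Y: "simple_function M Y" and Z: "simple_function M Z"
  shows "\<I>(X;Y|Z) = \<H>(\<lambda>x. (Y x, Z x)) - \<H>(\<lambda>x. (X x, Y x, Z x)) - \<H>(Z) + \<H>(\<lambda>x. (X x, Z x))"
proof -
  have YZ: "simple_function M (\<lambda>x. (Y x, Z x))" using Y Z by (rule simple_function_Pair)
  have fY: "finite (Y`space M)" using Y by (rule simple_functionD)
  have fZ: "finite (Z`space M)" using Z by (rule simple_functionD)
  have PM: "count_space (Y`space M) \<Otimes>\<^sub>M count_space (Z`space M) = count_space (Y`space M \<times> Z`space M)"
    using fY fZ by (simp add: pair_measure_count_space)
  have "mutual_information b (count_space (X`space M)) (count_space (Y`space M) \<Otimes>\<^sub>M count_space (Z`space M)) X (\<lambda>x. (Y x, Z x))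
     = \<I>(X; \<lambda>x. (Y x, Z x))"
    unfolding PM by (rule MI_superset[OF X YZ]) (use fY fZ in auto)
  then show ?thesis
    unfolding conditional_mutual_information_def
    using MI_entropy[OF X YZ] MI_entropy[OF X Z] by simp
qed


lemma entropy_const:
  "\<H>(\<lambda>_::'a. c) = 0"
proof -
  have sf: "simple_function M (\<lambda>_::'a. c)" by simp
  have sd: "simple_distributed M (\<lambda>_::'a. c) (\<lambda>_. 1)"
    by (rule simple_distributedI[OF sf]) (auto simp: prob_space)
  have im: "(\<lambda>_::'a. c)`space M = {c}" using not_empty by auto
  show ?thesis by (subst entropy_simple_distributed[OF sd]) (simp add: im)
qed

lemma MI_const:
  assumes Y: "simple_function M Y"
  shows "\<I>(\<lambda>_::'a. c; Y) = 0"
proof -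
  have sf: "simple_function M (\<lambda>_::'a. c)" by simp
  have "\<H>(\<lambda>x. (c, Y x)) = \<H>(Pair c \<circ> Y)" by (simp add: comp_def)
  also have "\<dots> = \<H>(Y)" by (rule entropy_of_inj[OF Y]) (auto simp: inj_on_def)
  finally show ?thesis using MI_entropy[OF sf Y] entropy_const by simp
qed

end

lemma sf_pmf: "simple_function (measure_pmf (M::'o::finite pmf)) f"
  by (simp add: simple_function_def)

lemma MI_empty:
  fixes M :: "'o::finite pmf"
  shows "MI M (Xsub X {}) Y = 0"
proof -
  interpret I: information_space "measure_pmf M" 2 by standard simp
  have "Xsub X {} = (\<lambda>_. (\<lambda>_. undefined))" by (simp add: Xsub_def fun_eq_iff)
  then show ?thesis unfolding MI_def using I.MI_const[OF sf_pmf] by simp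
qed

lemma info_identity:
  fixes M :: "'o::finite pmf" and X :: "nat \<Rightarrow> 'o \<Rightarrow> 'v" and Y :: "'o \<Rightarrow> 'w"
  assumes j: "j \<in> {1..n}"
  shows "CMI M (X j) Y (Xsub X ({1..n}-{j})) = MI M (Xsub X {1..n}) Y - MI M (Xsub X ({1..n}-{j})) Y"
proof -
  interpret I: information_space "measure_pmf M" 2 by standard simp
  define F where "F = Xsub X {1..n}"
  define B where "B = Xsub X ({1..n}-{j})"
  define h where "h = (\<lambda>f::nat \<Rightarrow> 'v. (f j, restrict f ({1..n}-{j})))"
  have ext: "F \<omega> \<in> extensional {1..n}" for \<omega> by (simp add: F_def Xsub_def)
  have injh: "inj_on h (range F)"
  proof (rule inj_onI)
    fix f g assume "f \<in> range F" "g \<in> range F" and e: "h f = h g"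
    then have ef: "f \<in> extensional {1..n}" "g \<in> extensional {1..n}" using ext by auto
    show "f = g"
    proof (rule extensionalityI[OF ef])
      fix i assume "i \<in> {1..n}"
      with e show "f i = g i" unfolding h_def by (cases "i = j") (auto simp: fun_eq_iff restrict_def split: if_splits)
    qed
  qed
  have AB: "(\<lambda>\<omega>. (X j \<omega>, B \<omega>)) = h \<circ> F"
    using j by (auto simp: h_def F_def B_def Xsub_def fun_eq_iff restrict_def)
  have H1: "prob_space.entropy (measure_pmf M) 2 (count_space (range (\<lambda>\<omega>. (X j \<omega>, B \<omega>)))) (\<lambda>\<omega>. (X j \<omega>, B \<omega>))
      = prob_space.entropy (measure_pmf M) 2 (count_space (range F)) F"
    unfolding AB using I.entropy_of_inj[where X=F and f=h, OF sf_pmf] injh by simp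
  define h' where "h' = (\<lambda>(f::nat \<Rightarrow> 'v, y::'w). (f j, y, restrict f ({1..n}-{j})))"
  have injh': "inj_on h' (range (\<lambda>\<omega>. (F \<omega>, Y \<omega>)))"
  proof (rule inj_onI)
    fix u v assume "u \<in> range (\<lambda>\<omega>. (F \<omega>, Y \<omega>))" "v \<in> range (\<lambda>\<omega>. (F \<omega>, Y \<omega>))" and e: "h' u = h' v"
    then obtain f y g z where uv: "u = (f, y)" "v = (g, z)" and ef: "f \<in> extensional {1..n}" "g \<in> extensional {1..n}"
      using ext by force
    have "f = g"
    proof (rule extensionalityI[OF ef])
      fix i assume "i \<in> {1..n}"
      with e show "f i = g i" unfolding h'_def uv by (cases "i = j") (auto simp: fun_eq_iff restrict_def split: if_splits)
    qed
    moreover have "y = z" using e unfolding h'_def uv by simp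
    ultimately show "u = v" using uv by simp
  qed
  have AYB: "(\<lambda>\<omega>. (X j \<omega>, Y \<omega>, B \<omega>)) = h' \<circ> (\<lambda>\<omega>. (F \<omega>, Y \<omega>))"
    using j by (auto simp: h'_def F_def B_def Xsub_def fun_eq_iff restrict_def)
  have H2: "prob_space.entropy (measure_pmf M) 2 (count_space (range (\<lambda>\<omega>. (X j \<omega>, Y \<omega>, B \<omega>)))) (\<lambda>\<omega>. (X j \<omega>, Y \<omega>, B \<omega>))
      = prob_space.entropy (measure_pmf M) 2 (count_space (range (\<lambda>\<omega>. (F \<omega>, Y \<omega>)))) (\<lambda>\<omega>. (F \<omega>, Y \<omega>))"
    unfolding AYB using I.entropy_of_inj[where X="(\<lambda>\<omega>. (F \<omega>, Y \<omega>))" and f=h', OF sf_pmf] injh' by simp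
  have "(\<lambda>\<omega>. (B \<omega>, Y \<omega>)) = (\<lambda>(a,b). (b,a)) \<circ> (\<lambda>\<omega>. (Y \<omega>, B \<omega>))" by (simp add: comp_def)
  then have H3: "prob_space.entropy (measure_pmf M) 2 (count_space (range (\<lambda>\<omega>. (B \<omega>, Y \<omega>)))) (\<lambda>\<omega>. (B \<omega>, Y \<omega>))
      = prob_space.entropy (measure_pmf M) 2 (count_space (range (\<lambda>\<omega>. (Y \<omega>, B \<omega>)))) (\<lambda>\<omega>. (Y \<omega>, B \<omega>))"
    using I.entropy_of_inj[where f="(\<lambda>(a,b). (b,a))" and X="(\<lambda>\<omega>. (Y \<omega>, B \<omega>))", OF sf_pmf]
    by (simp add: inj_on_def)
  show ?thesis
    unfolding MI_def CMI_def F_def[symmetric] B_def[symmetric]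
    using I.CMI_entropy[OF sf_pmf sf_pmf sf_pmf, of "X j" Y B]
      I.MI_entropy[OF sf_pmf sf_pmf, of F Y] I.MI_entropy[OF sf_pmf sf_pmf, of B Y] H1 H2 H3
    by simp
qed



lemma finite_antichains: "finite (antichains n)"
proof -
  have "antichains n \<subseteq> Pow (Pow {1..n})" by (auto simp: antichains_def)
  then show ?thesis by (rule finite_subset) simp
qed

lemma vuln_le: "vuln n \<alpha> \<le> n"
proof -
  have "vuln n \<alpha> \<le> card {1..n}" unfolding vuln_def by (rule card_mono) auto
  then show ?thesis by simp
qed

lemma avg_sum:
  "avg_vuln M n X Y P = (\<Sum>\<alpha>\<in>antichains n. real (vuln n \<alpha>) * P \<alpha>) / MI M (Xsub X {1..n}) Y"
proof -
  let ?I = "MI M (Xsub X {1..n}) Y"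
  have "avg_vuln M n X Y P = (\<Sum>j=0..n. (\<Sum>\<alpha>\<in>{\<alpha>\<in>antichains n. vuln n \<alpha> = j}. real (vuln n \<alpha>) * P \<alpha>)) / ?I"
    unfolding avg_vuln_def sum_divide_distrib sum_distrib_left
    by (intro sum.cong refl) auto
  also have "(\<Sum>j=0..n. (\<Sum>\<alpha>\<in>{\<alpha>\<in>antichains n. vuln n \<alpha> = j}. real (vuln n \<alpha>) * P \<alpha>))
      = (\<Sum>\<alpha>\<in>antichains n. real (vuln n \<alpha>) * P \<alpha>)"
    by (rule sum.group) (auto simp: finite_antichains vuln_le)
  finally show ?thesis .
qed

lemma vuln_sum: "real (vuln n \<alpha>) = (\<Sum>i=1..n. if (\<forall>b\<in>\<alpha>. i \<in> b) then 1 else 0)"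
  unfolding vuln_def by (simp add: sum.inter_filter[symmetric])

lemma swap_part:
  "(\<Sum>\<alpha>\<in>antichains n. real (vuln n \<alpha>) * P \<alpha>) =
   (\<Sum>i=1..n. \<Sum>\<alpha>\<in>{\<alpha>\<in>antichains n. \<forall>b\<in>\<alpha>. i \<in> b}. P \<alpha>)"
proof -
  have "(\<Sum>\<alpha>\<in>antichains n. real (vuln n \<alpha>) * P \<alpha>) =
    (\<Sum>\<alpha>\<in>antichains n. \<Sum>i=1..n. if (\<forall>b\<in>\<alpha>. i \<in> b) then P \<alpha> else 0)"
    unfolding vuln_sum sum_distrib_right by (intro sum.cong refl) auto
  also have "\<dots> = (\<Sum>i=1..n. \<Sum>\<alpha>\<in>antichains n. if (\<forall>b\<in>\<alpha>. i \<in> b) then P \<alpha> else 0)"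
    by (rule sum.swap)
  also have "\<dots> = (\<Sum>i=1..n. \<Sum>\<alpha>\<in>{\<alpha>\<in>antichains n. \<forall>b\<in>\<alpha>. i \<in> b}. P \<alpha>)"
    by (simp add: sum.inter_filter finite_antichains)
  finally show ?thesis .
qed

lemma split_part:
  "sum P (antichains n) = (\<Sum>\<alpha>\<in>{\<alpha>\<in>antichains n. \<forall>b\<in>\<alpha>. i \<in> b}. P \<alpha>)
     + (\<Sum>\<alpha>\<in>{\<alpha>\<in>antichains n. \<exists>b\<in>\<alpha>. b \<subseteq> {1..n} - {i}}. P \<alpha>)"
proof -
  have e: "{\<alpha>\<in>antichains n. \<exists>b\<in>\<alpha>. b \<subseteq> {1..n} - {i}} = {\<alpha>\<in>antichains n. \<not> (\<forall>b\<in>\<alpha>. i \<in> b)}"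
    by (auto simp: antichains_def)
  show ?thesis unfolding e sum.inter_filter[OF finite_antichains] sum.distrib[symmetric]
    by (intro sum.cong refl) auto
qed


theorem proposition2:
  fixes M :: "'o::finite pmf" and n :: nat
    and X :: "nat \<Rightarrow> 'o \<Rightarrow> 'v" and Y :: "'o \<Rightarrow> 'w"
    and P :: "nat set set \<Rightarrow> real"
  assumes "n \<ge> 1"
    and "MI M (Xsub X {1..n}) Y > 0"
    and "is_PID M n X Y P"
  shows "avg_vuln M n X Y P =
     (\<Sum>j=1..n. CMI M (X j) Y (Xsub X ({1..n} - {j}))) / MI M (Xsub X {1..n}) Y"
proof -
  let ?I = "MI M (Xsub X {1..n}) Y"
  have pid: "\<And>a. a \<noteq> {} \<Longrightarrow> a \<subseteq> {1..n} \<Longrightarrow>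
      MI M (Xsub X a) Y = (\<Sum>\<alpha>\<in>{\<alpha>\<in>antichains n. \<exists>b\<in>\<alpha>. b \<subseteq> a}. P \<alpha>)"
    using assms(3) unfolding is_PID_def by blast
  have "{\<alpha>\<in>antichains n. \<exists>b\<in>\<alpha>. b \<subseteq> {1..n}} = antichains n"
    by (auto simp: antichains_def)
  then have tot: "sum P (antichains n) = ?I"
    using pid[of "{1..n}"] assms(1) by simp
  have part: "(\<Sum>\<alpha>\<in>{\<alpha>\<in>antichains n. \<forall>b\<in>\<alpha>. i \<in> b}. P \<alpha>) = CMI M (X i) Y (Xsub X ({1..n} - {i}))"
    if i: "i \<in> {1..n}" for i
  proof -
    have "(\<Sum>\<alpha>\<in>{\<alpha>\<in>antichains n. \<exists>b\<in>\<alpha>. b \<subseteq> {1..n} - {i}}. P \<alpha>) = MI M (Xsub X ({1..n} - {i})) Y"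
    proof (cases "{1..n} - {i} = {}")
      case True
      have "{\<alpha>\<in>antichains n. \<exists>b\<in>\<alpha>. b \<subseteq> {1..n} - {i}} = {}"
        unfolding True by (auto simp: antichains_def)
      then show ?thesis by (simp only: True MI_empty sum.empty)
    next
      case False
      then show ?thesis using pid[of "{1..n} - {i}"] by auto
    qed
    then show ?thesis using split_part[of P n i] tot info_identity[OF i, of M X Y] by simp
  qed
  show ?thesis
    unfolding avg_sum swap_part using part by (intro arg_cong[where f="\<lambda>x. x / ?I"] sum.cong) auto
qed

end
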